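(* Let $\mathcal{T}$ be a tiling of $\mathbb{R}^d$ that is repetitive, has finite local complexity and has the Meyer property. Then for every finite $\mathcal{T}$-legal patch $\mathcal{P}$ and every $n>0$ there is $z\in\mathbb{R}^d\setminus\{0\}$ such that $\bigcup_{k=1}^n(\mathcal{P}+kz)$ is $\mathcal{T}$-legal. Moreover, for any unit vector $u$ and any $\delta>0$, $z$ can be chosen with $\|z/\|z\|-u\|<\delta$.
   Context: A tile in $\mathbb{R}^d$ is a compact set equal to the closure of its interior, possibly labeled from a finite set. A patch is a set of tiles with pairwise disjoint interiors; a tiling is a patch whose support is $\mathbb{R}^d$. A patch $\mathcal{P}$ is $\mathcal{T}$-legal if $\mathcal{P}+y\subset\mathcal{T}$ for some $y$. $\mathcal{P}\sqcap S=\{T\in\mathcal{P}:\operatorname{supp}T\cap S\neq\emptyset\}$. $\mathcal{T}$ has finite local complexity if for each compact $K$ the set $\{\mathcal{T}\sqcap(K+x)\}_x$ is finite up to translation, and is repetitive if for every finite $\mathcal{T}$-legal patch $\mathcal{P}$ there is $R>0$ such that every ball of radius $R$ contains the support of some translate $\mathcal{P}+x\subset\mathcal{T}$. $\mathcal{T}$ has the Meyer property if one can choose a point in the support of each tile, with the same relative position for tiles that are translates of each other, such that the resulting set $D$ is a Meyer set: a Delone set with $((D-D)-(D-D))\cap U=\{0\}$ for some neighbourhood $U$ of $0$. *)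

theory Defs
  imports "HOL-Analysis.Analysis"
begin

type_synonym ('a, 'l) tile = "'a set \<times> 'l"

definition supp :: "('a, 'l) tile \<Rightarrow> 'a set" where
  "supp t = fst t"

definition is_tile :: "('a::euclidean_space, 'l) tile \<Rightarrow> bool" where
  "is_tile t \<longleftrightarrow> compact (supp t) \<and> supp t = closure (interior (supp t))"

definition is_patch :: "('a::euclidean_space, 'l) tile set \<Rightarrow> bool" where
  "is_patch P \<longleftrightarrow> (\<forall>t\<in>P. is_tile t) \<and>
     (\<forall>t\<in>P. \<forall>t'\<in>P. t \<noteq> t' \<longrightarrow> interior (supp t) \<inter> interior (supp t') = {})"

definition patch_supp :: "('a, 'l) tile set \<Rightarrow> 'a set" where
  "patch_supp P = (\<Union>t\<in>P. supp t)"

definition is_tiling :: "('a::euclidean_space, 'l) tile set \<Rightarrow> bool" where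
  "is_tiling T \<longleftrightarrow> is_patch T \<and> patch_supp T = UNIV"

definition tile_transl :: "('a::euclidean_space, 'l) tile \<Rightarrow> 'a \<Rightarrow> ('a, 'l) tile" where
  "tile_transl t y = ((\<lambda>x. x + y) ` fst t, snd t)"

definition patch_transl :: "('a::euclidean_space, 'l) tile set \<Rightarrow> 'a \<Rightarrow> ('a, 'l) tile set" where
  "patch_transl P y = (\<lambda>t. tile_transl t y) ` P"

definition legal :: "('a::euclidean_space, 'l) tile set \<Rightarrow> ('a, 'l) tile set \<Rightarrow> bool" where
  "legal T P \<longleftrightarrow> (\<exists>y. patch_transl P y \<subseteq> T)"

definition patch_meet :: "('a, 'l) tile set \<Rightarrow> 'a set \<Rightarrow> ('a, 'l) tile set" where
  "patch_meet P S = {t\<in>P. supp t \<inter> S \<noteq> {}}"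

definition FLC :: "('a::euclidean_space, 'l) tile set \<Rightarrow> bool" where
  "FLC T \<longleftrightarrow> (\<forall>K. compact K \<longrightarrow>
     (\<exists>F. finite F \<and> (\<forall>x. \<exists>Q\<in>F. \<exists>y. patch_meet T ((\<lambda>k. k + x) ` K) = patch_transl Q y)))"

definition repetitive :: "('a::euclidean_space, 'l) tile set \<Rightarrow> bool" where
  "repetitive T \<longleftrightarrow> (\<forall>P. finite P \<and> legal T P \<longrightarrow>
     (\<exists>R>0. \<forall>c. \<exists>x. patch_transl P x \<subseteq> T \<and> patch_supp (patch_transl P x) \<subseteq> ball c R))"

definition delone :: "'a::euclidean_space set \<Rightarrow> bool" where
  "delone D \<longleftrightarrow> (\<exists>r>0. \<forall>x\<in>D. \<forall>y\<in>D. x \<noteq> y \<longrightarrow> dist x y \<ge> r) \<and>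
                 (\<exists>R>0. \<forall>x. \<exists>y\<in>D. dist x y \<le> R)"

definition meyer_set :: "'a::euclidean_space set \<Rightarrow> bool" where
  "meyer_set D \<longleftrightarrow> delone D \<and>
     (\<exists>U. open U \<and> 0 \<in> U \<and> {(a - b) - (c - e) | a b c e. a \<in> D \<and> b \<in> D \<and> c \<in> D \<and> e \<in> D} \<inter> U = {0})"

definition meyer_property :: "('a::euclidean_space, 'l) tile set \<Rightarrow> bool" where
  "meyer_property T \<longleftrightarrow> (\<exists>c. (\<forall>t\<in>T. c t \<in> supp t) \<and>
     (\<forall>t\<in>T. \<forall>t'\<in>T. \<forall>y. t' = tile_transl t y \<longrightarrow> c t' = c t + y) \<and>
     meyer_set (c ` T))"

end

theory Submission
  imports Defs
begin

definition vdw_prop :: "nat \<Rightarrow> nat \<Rightarrow> nat \<Rightarrow> bool" where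
  "vdw_prop k r N \<longleftrightarrow> (\<forall>c::nat\<Rightarrow>nat. (\<forall>i<N. c i < r) \<longrightarrow>
     (\<exists>a d. 0 < d \<and> d < N \<and> a + k * d < N \<and> (\<forall>j\<le>k. c (a + j * d) = c a)))"

lemma vdw_focus:
  fixes s :: nat
  assumes IH: "\<forall>r. \<exists>N. vdw_prop k r N"
  shows "\<exists>M. \<forall>c::nat\<Rightarrow>nat. (\<forall>i<M. c i < r) \<longrightarrow>
    (\<exists>a d. 0 < d \<and> d < M \<and> a + Suc k * d < M \<and> (\<forall>j\<le>Suc k. c (a + j * d) = c a)) \<or>
    (\<exists>f A D. f < M \<and> (\<forall>i<s. 0 < D i \<and> A i + Suc k * D i = f \<and>
         (\<forall>j\<le>k. c (A i + j * D i) = c (A i))) \<and> inj_on (\<lambda>i. c (A i)) {..<s})"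
proof (induction s)
  case 0
  show ?case by (rule exI[of _ 1], intro allI impI disjI2, rule exI[of _ 0], simp)
next
  case (Suc s)
  from Suc.IH obtain M where HM0: "\<forall>c::nat\<Rightarrow>nat. (\<forall>i<M. c i < r) \<longrightarrow>
    (\<exists>a d. 0 < d \<and> d < M \<and> a + Suc k * d < M \<and> (\<forall>j\<le>Suc k. c (a + j * d) = c a)) \<or>
    (\<exists>f A D. f < M \<and> (\<forall>i<s. 0 < D i \<and> A i + Suc k * D i = f \<and>
         (\<forall>j\<le>k. c (A i + j * D i) = c (A i))) \<and> inj_on (\<lambda>i. c (A i)) {..<s})" ..
  note HM = HM0[THEN spec, THEN mp]
  define S where "S = {xs. set xs \<subseteq> {..<r} \<and> length xs = 2*M}"
  have "finite S" unfolding S_def by (rule finite_lists_length_eq) simp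
  obtain n0 and h :: "nat \<Rightarrow> nat list" where Sh: "S = h ` {i. i < n0}" and hinj: "inj_on h {i. i < n0}"
    using finite_imp_nat_seg_image_inj_on[OF \<open>finite S\<close>] by auto
  obtain L where HL: "vdw_prop k n0 L" using IH by auto
  define N where "N = 4 * M * L"
  show ?case
  proof (rule exI[of _ N], intro allI impI)
    fix c :: "nat \<Rightarrow> nat"
    assume cr: "\<forall>i<N. c i < r"
    define blk where "blk b = map (\<lambda>i. c (2*M*b + i)) [0..<2*M]" for b
    define g where "g b = the_inv_into {i. i < n0} h (blk b)" for b
    have blkS: "blk b \<in> S" if "b < L" for b
    proof -
      have "2*M*b + i < N" if "i < 2*M" for i
      proof -
        have "2*M*b + i < 2*M*(b+1)" using that by simp
        also have "\<dots> \<le> 2*M*L" using \<open>b < L\<close> by (intro mult_le_mono2) simp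
        also have "\<dots> \<le> N" unfolding N_def by simp
        finally show ?thesis .
      qed
      then show ?thesis unfolding S_def blk_def using cr by auto
    qed
    have gl: "g b < n0" if "b < L" for b
      using the_inv_into_into[OF hinj, of "blk b" "{i. i < n0}"] blkS[OF that] Sh
      unfolding g_def by auto
    have hg: "h (g b) = blk b" if "b < L" for b
      using f_the_inv_into_f[OF hinj, of "blk b"] blkS[OF that] Sh unfolding g_def by auto
    obtain b e where e0: "0 < e" and eL: "e < L" and beL: "b + k * e < L"
      and geq: "\<forall>j\<le>k. g (b + j * e) = g b"
      using HL gl unfolding vdw_prop_def by blast
    have bL: "b < L" using beL by simp
    have same: "c (2*M*(b + j*e) + i) = c (2*M*b + i)" if "j \<le> k" "i < 2*M" for j i
    proof -
      have "b + j*e < L" using that beL by (meson add_le_mono le_refl mult_le_mono1 order_le_less_trans)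
      moreover have "h (g (b + j*e)) = h (g b)" using geq that by simp
      ultimately have "blk (b + j*e) = blk b" using hg bL by simp
      then have "blk (b + j*e) ! i = blk b ! i" by simp
      then show ?thesis unfolding blk_def using that by simp
    qed
    define c' where "c' i = c (2*M*b + i)" for i
    have c'r: "\<forall>i<M. c' i < r"
    proof (intro allI impI)
      fix i assume "i < M"
      have "2*M*b + i < 2*M*(b+1)" using \<open>i<M\<close> by simp
      also have "\<dots> \<le> 2*M*L" using bL by (intro mult_le_mono2) simp
      also have "\<dots> \<le> N" unfolding N_def by simp
      finally show "c' i < r" unfolding c'_def using cr by simp
    qed
    have NM: "2*M*b + M \<le> N" 
    proof -
      have "2*M*b + M \<le> 2*M*(b+1)" by simp
      also have "\<dots> \<le> 2*M*L" using bL by (intro mult_le_mono2) simp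
      also have "\<dots> \<le> N" unfolding N_def by simp
      finally show ?thesis .
    qed
    from HM[OF c'r] show "(\<exists>a d. 0 < d \<and> d < N \<and> a + Suc k * d < N \<and> (\<forall>j\<le>Suc k. c (a + j * d) = c a)) \<or>
    (\<exists>f A D. f < N \<and> (\<forall>i<Suc s. 0 < D i \<and> A i + Suc k * D i = f \<and>
         (\<forall>j\<le>k. c (A i + j * D i) = c (A i))) \<and> inj_on (\<lambda>i. c (A i)) {..<Suc s})"
    proof
      assume "\<exists>a d. 0 < d \<and> d < M \<and> a + Suc k * d < M \<and> (\<forall>j\<le>Suc k. c' (a + j * d) = c' a)"
      then obtain a d where "0 < d" "d < M" "a + Suc k * d < M" "\<forall>j\<le>Suc k. c' (a + j * d) = c' a" by blast
      note H = this
      show ?thesis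
        apply (rule disjI1, rule exI[of _ "2*M*b + a"], rule exI[of _ d])
        using H NM by (auto simp: c'_def add.assoc)
    next
      assume "\<exists>f A D. f < M \<and> (\<forall>i<s. 0 < D i \<and> A i + Suc k * D i = f \<and>
         (\<forall>j\<le>k. c' (A i + j * D i) = c' (A i))) \<and> inj_on (\<lambda>i. c' (A i)) {..<s}"
      then obtain f A D where fM: "f < M" and AD: "\<forall>i<s. 0 < D i \<and> A i + Suc k * D i = f \<and>
         (\<forall>j\<le>k. c' (A i + j * D i) = c' (A i))" and inj: "inj_on (\<lambda>i. c' (A i)) {..<s}" by blast
      show ?thesis
      proof (cases "\<exists>i<s. c' f = c' (A i)")
        case True
        then obtain i where i: "i < s" "c' f = c' (A i)" by blast
        have e1: "A i + Suc k * D i = f" using AD i by blast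
        have "D i \<le> Suc k * D i" by simp
        then have DM: "D i < M" using e1 fM by linarith
        show ?thesis
        proof (rule disjI1, rule exI[of _ "2*M*b + A i"], rule exI[of _ "D i"], intro conjI allI impI)
          show "0 < D i" using AD i by blast
          show "D i < N" using DM NM by linarith
          show "2 * M * b + A i + Suc k * D i < N" using e1 fM NM by linarith
          fix j assume j: "j \<le> Suc k"
          show "c (2 * M * b + A i + j * D i) = c (2 * M * b + A i)"
          proof (cases "j = Suc k")
            case True
            then show ?thesis using e1 i unfolding c'_def by (simp add: add.assoc)
          next
            case False
            then have "j \<le> k" using j by simp
            then have "c' (A i + j * D i) = c' (A i)" using AD i by blast
            then show ?thesis unfolding c'_def by (simp add: add.assoc)
          qed
        qed
      next
        case False
        define f' where "f' = 2*M*b + f + Suc k * (2*M*e)"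
        define A' where "A' i = (if i < s then 2*M*b + A i else 2*M*b + f)" for i
        define D' where "D' i = (if i < s then D i + 2*M*e else 2*M*e)" for i
        have Mpos: "0 < M" using fM by simp
        have f'N: "f' < N"
        proof -
          have "b + Suc k * e < 2*L" using beL eL by simp
          then have "b + Suc k * e + 1 \<le> 2*L" by simp
          then have "2*M*(b + Suc k * e + 1) \<le> 2*M*(2*L)" by (meson mult_le_mono2)
          moreover have "f' < 2*M*(b + Suc k * e + 1)" unfolding f'_def using fM
            by (simp add: algebra_simps)
          ultimately show ?thesis unfolding N_def by simp
        qed
        show ?thesis
        proof (rule disjI2, rule exI[of _ f'], rule exI[of _ A'], rule exI[of _ D'], intro conjI allI impI)
          show "f' < N" by (rule f'N)
          fix i assume i: "i < Suc s"
          show "0 < D' i" unfolding D'_def using AD e0 Mpos i by auto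
          show "A' i + Suc k * D' i = f'"
          proof (cases "i < s")
            case True
            then have "A i + Suc k * D i = f" using AD by blast
            then show ?thesis unfolding A'_def D'_def f'_def using True
              by (simp add: algebra_simps)
          next
            case False
            then show ?thesis unfolding A'_def D'_def f'_def by (simp add: algebra_simps)
          qed
          fix j assume j: "j \<le> k"
          show "c (A' i + j * D' i) = c (A' i)"
          proof (cases "i < s")
            case True
            then have h1: "A i + Suc k * D i = f" and h2: "c' (A i + j * D i) = c' (A i)" using AD j by auto
            have "A i + j * D i \<le> f" using h1 mult_le_mono1[of j "Suc k" "D i"] j by linarith
            then have lt: "A i + j * D i < 2*M" using fM by linarith
            have "A' i + j * D' i = 2*M*(b + j*e) + (A i + j * D i)" unfolding A'_def D'_def using True
              by (simp add: algebra_simps)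
            then have "c (A' i + j * D' i) = c (2*M*b + (A i + j * D i))" using same[OF j lt] by simp
            then show ?thesis using h2 True unfolding c'_def A'_def by simp
          next
            case False
            have eq: "A' i + j * D' i = 2*M*(b + j*e) + f" unfolding A'_def D'_def using False
              by (simp add: algebra_simps)
            have "c (A' i + j * D' i) = c (2*M*(b + j*e) + f)" by (simp only: eq)
            also have "\<dots> = c (2*M*b + f)" using same[OF j, of f] fM by simp
            finally show ?thesis using False unfolding A'_def by simp
          qed
        next
          show "inj_on (\<lambda>i. c (A' i)) {..<Suc s}"
          proof -
            have eq: "c (A' i) = (if i < s then c' (A i) else c' f)" for i
              unfolding A'_def c'_def by simp
            show ?thesis unfolding inj_on_def eq
            proof (intro ballI impI)
              fix x y assume x: "x \<in> {..<Suc s}" and y: "y \<in> {..<Suc s}"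
                and xy: "(if x < s then c' (A x) else c' f) = (if y < s then c' (A y) else c' f)"
              show "x = y"
              proof (cases "x < s")
                case True
                show ?thesis
                proof (cases "y < s")
                  case True
                  then show ?thesis using \<open>x < s\<close> xy inj unfolding inj_on_def by auto
                next
                  case False
                  then show ?thesis using \<open>x < s\<close> xy \<open>\<not> (\<exists>i<s. c' f = c' (A i))\<close> by auto
                qed
              next
                case False
                show ?thesis
                proof (cases "y < s")
                  case True
                  then show ?thesis using \<open>\<not> x < s\<close> xy \<open>\<not> (\<exists>i<s. c' f = c' (A i))\<close> by auto
                next
                  case False
                  then show ?thesis using \<open>\<not> x < s\<close> x y by auto
                qed
              qed
            qed
          qed
        qed
      qed
    qed
  qed
qed

lemma vdw_exists: "\<exists>N. vdw_prop k r N"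
proof (induction k arbitrary: r)
  case 0
  show ?case
  proof (rule exI[of _ 2], unfold vdw_prop_def, intro allI impI)
    fix c :: "nat \<Rightarrow> nat"
    show "\<exists>a d. 0 < d \<and> d < 2 \<and> a + 0 * d < 2 \<and> (\<forall>j\<le>0. c (a + j * d) = c a)"
      by (rule exI[of _ 0], rule exI[of _ 1]) simp
  qed
next
  case (Suc k)
  then have IH: "\<forall>r. \<exists>N. vdw_prop k r N" by blast
  from vdw_focus[OF IH, of r r] obtain M where HM0: "\<forall>c::nat\<Rightarrow>nat. (\<forall>i<M. c i < r) \<longrightarrow>
    (\<exists>a d. 0 < d \<and> d < M \<and> a + Suc k * d < M \<and> (\<forall>j\<le>Suc k. c (a + j * d) = c a)) \<or>
    (\<exists>f A D. f < M \<and> (\<forall>i<r. 0 < D i \<and> A i + Suc k * D i = f \<and>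
         (\<forall>j\<le>k. c (A i + j * D i) = c (A i))) \<and> inj_on (\<lambda>i. c (A i)) {..<r})" ..
  note HM = HM0[THEN spec, THEN mp]
  show ?case
  proof (rule exI[of _ M], unfold vdw_prop_def, intro allI impI)
    fix c :: "nat \<Rightarrow> nat"
    assume cr: "\<forall>i<M. c i < r"
    from HM[OF cr] show "\<exists>a d. 0 < d \<and> d < M \<and> a + Suc k * d < M \<and> (\<forall>j\<le>Suc k. c (a + j * d) = c a)"
    proof
      assume "\<exists>f A D. f < M \<and> (\<forall>i<r. 0 < D i \<and> A i + Suc k * D i = f \<and>
         (\<forall>j\<le>k. c (A i + j * D i) = c (A i))) \<and> inj_on (\<lambda>i. c (A i)) {..<r}"
      then obtain f A D where fM: "f < M" and AD: "\<forall>i<r. 0 < D i \<and> A i + Suc k * D i = f \<and>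
         (\<forall>j\<le>k. c (A i + j * D i) = c (A i))" and inj: "inj_on (\<lambda>i. c (A i)) {..<r}" by blast
      have sub: "(\<lambda>i. c (A i)) ` {..<r} \<subseteq> {..<r}"
      proof
        fix x assume "x \<in> (\<lambda>i. c (A i)) ` {..<r}"
        then obtain i where i: "i < r" "x = c (A i)" by auto
        have "A i \<le> f" using AD i by (metis le_add1)
        then show "x \<in> {..<r}" using cr fM i by simp
      qed
      have "card ((\<lambda>i. c (A i)) ` {..<r}) = r" using card_image[OF inj] by simp
      then have "(\<lambda>i. c (A i)) ` {..<r} = {..<r}" using sub by (simp add: card_subset_eq)
      moreover have "c f \<in> {..<r}" using cr fM by simp
      ultimately obtain i where i: "i < r" "c f = c (A i)" by (metis imageE lessThan_iff)
      have e1: "A i + Suc k * D i = f" using AD i by blast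
      have "D i \<le> Suc k * D i" by simp
      then have DM: "D i < M" using e1 fM by linarith
      show ?thesis
      proof (rule exI[of _ "A i"], rule exI[of _ "D i"], intro conjI allI impI)
        show "0 < D i" using AD i by blast
        show "D i < M" by (rule DM)
        show "A i + Suc k * D i < M" using e1 fM by simp
        fix j assume j: "j \<le> Suc k"
        show "c (A i + j * D i) = c (A i)"
        proof (cases "j = Suc k")
          case True
          then show ?thesis using e1 i by simp
        next
          case False
          then show ?thesis using AD i j by simp
        qed
      qed
    qed
  qed
qed

lemma dir_lemma:
  fixes z u :: "'a::real_normed_vector"
  assumes u: "norm u = 1" and s: "s > B" and B: "B > 0" and zs: "norm (z - s *\<^sub>R u) < B"
  shows "z \<noteq> 0" "norm (z /\<^sub>R norm z - u) < 2 * B / s"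
proof -
  have spos: "s > 0" using s B by linarith
  show "z \<noteq> 0"
  proof
    assume "z = 0"
    then have "norm (z - s *\<^sub>R u) = s" using u spos by simp
    then show False using zs s by linarith
  qed
  then have nz: "norm z > 0" by simp
  have eq: "z /\<^sub>R norm z - u = (1/s) *\<^sub>R (z - s *\<^sub>R u) + ((s - norm z)/s) *\<^sub>R (z /\<^sub>R norm z)"
  proof -
    have c: "1/norm z = 1/s + (s - norm z)/(s * norm z)" using nz spos by (simp add: field_simps)
    have e1: "(1/s) *\<^sub>R (z - s *\<^sub>R u) = (1/s) *\<^sub>R z - u" using spos by (simp add: scaleR_diff_right)
    have e2: "((s - norm z)/s) *\<^sub>R (z /\<^sub>R norm z) = ((s - norm z)/(s * norm z)) *\<^sub>R z" by (simp add: divide_inverse mult.commute mult.left_commute)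
    have "z /\<^sub>R norm z = (1/s + (s - norm z)/(s * norm z)) *\<^sub>R z" using c by (simp add: divide_inverse)
    also have "\<dots> = (1/s) *\<^sub>R z + ((s - norm z)/(s * norm z)) *\<^sub>R z" by (rule scaleR_add_left)
    finally show ?thesis unfolding e1 e2 by simp
  qed
  have n1: "norm (z /\<^sub>R norm z) = 1" using nz by simp
  have t3: "\<bar>s - norm z\<bar> \<le> norm (z - s *\<^sub>R u)"
  proof -
    have "norm (s *\<^sub>R u) = s" using u spos by simp
    then show ?thesis using norm_triangle_ineq3[of "s *\<^sub>R u" z] by (simp add: norm_minus_commute)
  qed
  have "norm (z /\<^sub>R norm z - u) \<le> norm ((1/s) *\<^sub>R (z - s *\<^sub>R u)) + norm (((s - norm z)/s) *\<^sub>R (z /\<^sub>R norm z))"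
    unfolding eq by (rule norm_triangle_ineq)
  also have "\<dots> = norm (z - s *\<^sub>R u) / s + \<bar>s - norm z\<bar> / s"
  proof -
    have "norm (((s - norm z)/s) *\<^sub>R (z /\<^sub>R norm z)) = \<bar>(s - norm z)/s\<bar>"
      by (subst norm_scaleR, subst n1) simp
    also have "\<dots> = \<bar>s - norm z\<bar> / s" using spos by simp
    finally show ?thesis using spos by simp
  qed
  also have "\<dots> \<le> 2 * norm (z - s *\<^sub>R u) / s"
    using t3 spos by (simp add: divide_right_mono add_divide_distrib[symmetric])
  also have "\<dots> < 2 * B / s" using zs spos by (simp add: divide_strict_right_mono)
  finally show "norm (z /\<^sub>R norm z - u) < 2 * B / s" .
qed


lemma ap_lemma:
  fixes Y :: "'a::euclidean_space set"
  assumes R: "R > 0" and dense: "\<forall>w. \<exists>x\<in>Y. norm (x - w) < R" and r: "r > 0"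
    and rig: "\<forall>a\<in>Y. \<forall>b\<in>Y. \<forall>c\<in>Y. \<forall>e\<in>Y. norm ((a - b) - (c - e)) < r \<longrightarrow> a - b = c - e"
    and u: "norm u = 1" and \<delta>: "\<delta> > 0" and n: "n > 0"
  shows "\<exists>z y. z \<noteq> 0 \<and> (\<forall>k\<le>n. y + real k *\<^sub>R z \<in> Y) \<and> norm (z /\<^sub>R norm z - u) < \<delta>"
proof -
  define B where "B = r / 4"
  have B: "B > 0" using r by (simp add: B_def)
  define L where "L = 2 * B / \<delta> + B + 1"
  have "2 * B / \<delta> > 0" using B \<delta> by simp
  then have LB: "L > B" unfolding L_def by linarith
  have L\<delta>: "2 * B / L < \<delta>"
  proof -
    have Lpos: "L > 0" using LB B by linarith
    have "2 * B / \<delta> < L" unfolding L_def using B \<delta> by simp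
    then have "2 * B < L * \<delta>" using \<delta> by (simp add: divide_less_eq)
    then show ?thesis using Lpos by (simp add: divide_less_eq mult.commute)
  qed
  define v where "v = L *\<^sub>R u"
  define ys where "ys i = (SOME x. x \<in> Y \<and> norm (x - real i *\<^sub>R v) < R)" for i :: nat
  have ys: "ys i \<in> Y \<and> norm (ys i - real i *\<^sub>R v) < R" for i
  proof -
    obtain x where "x \<in> Y" "norm (x - real i *\<^sub>R v) < R" using dense by blast
    then have "\<exists>x. x \<in> Y \<and> norm (x - real i *\<^sub>R v) < R" by blast
    then show ?thesis unfolding ys_def by (rule someI_ex)
  qed
  define e where "e i = ys i - real i *\<^sub>R v" for i :: nat
  have ecb: "e i \<in> cball 0 R" for i using ys[of i] unfolding e_def by (simp add: dist_norm norm_minus_commute)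
  obtain F where F: "finite F" "cball (0::'a) R \<subseteq> (\<Union>x\<in>F. ball x (r/8))"
    using seq_compact_imp_totally_bounded[OF compact_imp_seq_compact[OF compact_cball[of "0::'a" R]]] r
    by (metis divide_pos_pos zero_less_numeral)
  obtain m and h :: "nat \<Rightarrow> 'a" where Fh: "F = h ` {i. i < m}"
    using finite_imp_nat_seg_image_inj_on[OF F(1)] by auto
  define col where "col i = (SOME j. j < m \<and> dist (h j) (e i) < r/8)" for i
  have col: "col i < m \<and> dist (h (col i)) (e i) < r/8" for i
  proof -
    obtain x where "x \<in> F" "e i \<in> ball x (r/8)" using F(2) ecb[of i] by blast
    then obtain j where "j < m" "dist (h j) (e i) < r/8" using Fh by auto
    then have "\<exists>j. j < m \<and> dist (h j) (e i) < r/8" by blast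
    then show ?thesis unfolding col_def by (rule someI_ex)
  qed
  have samecol: "norm (e i - e i') < r/4" if "col i = col i'" for i i'
  proof -
    have "dist (e i) (e i') \<le> dist (h (col i)) (e i) + dist (h (col i)) (e i')" by (rule dist_triangle3)
    also have "\<dots> < r/8 + r/8" using col[of i] col[of i'] that by (metis add_strict_mono)
    finally show ?thesis by (simp add: dist_norm)
  qed
  obtain N where "vdw_prop n m N" using vdw_exists by blast
  then obtain a d where d0: "0 < d" and colAP: "\<forall>j\<le>n. col (a + j * d) = col a"
    unfolding vdw_prop_def using col by blast
  define z where "z = ys (a + d) - ys a"
  have close: "norm ((e (a + j1 * d) - e (a + j2 * d)) - (e (a + j3 * d) - e (a + j4 * d))) < r"
    if "j1 \<le> n" "j2 \<le> n" "j3 \<le> n" "j4 \<le> n" for j1 j2 j3 j4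
  proof -
    have "norm ((e (a + j1 * d) - e (a + j2 * d)) - (e (a + j3 * d) - e (a + j4 * d)))
       \<le> norm (e (a + j1 * d) - e (a + j2 * d)) + norm (e (a + j3 * d) - e (a + j4 * d))"
      by (rule norm_triangle_ineq4)
    also have "\<dots> < r/4 + r/4" using samecol colAP that by (metis add_strict_mono)
    finally show ?thesis using r by simp
  qed
  have yse: "ys i = e i + real i *\<^sub>R v" for i unfolding e_def by simp
  have AP: "ys (a + j * d) = ys a + real j *\<^sub>R z" if "j \<le> n" for j
    using that
  proof (induction j)
    case 0
    then show ?case by simp
  next
    case (Suc j)
    have jn: "j \<le> n" "Suc j \<le> n" "1 \<le> n" "0 \<le> n" using Suc n by auto
    have "(ys (a + Suc j * d) - ys (a + j * d)) - (ys (a + 1 * d) - ys (a + 0 * d))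
        = (e (a + Suc j * d) - e (a + j * d)) - (e (a + 1 * d) - e (a + 0 * d))"
      unfolding yse by (simp add: algebra_simps)
    then have "norm ((ys (a + Suc j * d) - ys (a + j * d)) - (ys (a + 1 * d) - ys (a + 0 * d))) < r"
      using close[OF jn(2) jn(1) jn(3) jn(4)] by simp
    then have "ys (a + Suc j * d) - ys (a + j * d) = ys (a + 1 * d) - ys (a + 0 * d)"
      using rig ys by blast
    then have "ys (a + Suc j * d) = ys (a + j * d) + z" unfolding z_def by (simp add: algebra_simps)
    then show ?case using Suc by (simp add: algebra_simps)
  qed
  define s where "s = real d * L"
  have sL: "s \<ge> L" unfolding s_def using d0 LB B by simp
  have zs: "z - s *\<^sub>R u = e (a + 1 * d) - e (a + 0 * d)"
    unfolding z_def s_def yse v_def by (simp add: algebra_simps)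
  have "norm (z - s *\<^sub>R u) < B"
  proof -
    have "1 \<le> n" using n by simp
    then have "col (a + 1 * d) = col a" using colAP by blast
    then have "col (a + 1 * d) = col (a + 0 * d)" by simp
    then show ?thesis unfolding zs B_def using samecol by blast
  qed
  note D = dir_lemma[OF u _ B this]
  have sB: "s > B" using sL LB by linarith
  have "2 * B / s \<le> 2 * B / L" using sL LB B by (intro divide_left_mono) auto
  then have dl: "norm (z /\<^sub>R norm z - u) < \<delta>" using D(2)[OF sB] L\<delta> by linarith
  have "\<forall>k\<le>n. ys a + real k *\<^sub>R z \<in> Y" using AP ys by metis
  then show ?thesis using dl D(1)[OF sB] by blast
qed


lemma tile_transl_comp: "tile_transl (tile_transl t a) b = tile_transl t (a + b)"
  unfolding tile_transl_def by (simp add: image_image add.assoc)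

lemma patch_transl_comp: "patch_transl (patch_transl P a) b = patch_transl P (a + b)"
  unfolding patch_transl_def by (simp add: image_image tile_transl_comp)

lemma supp_transl: "supp (tile_transl t x) = (\<lambda>k. k + x) ` supp t"
  unfolding supp_def tile_transl_def by simp

lemma main_part2:
  fixes T :: "('a::euclidean_space, 'l) tile set"
  assumes "is_tiling T" and rep: "repetitive T" and "FLC T" and mey: "meyer_property T"
    and P: "finite P" "legal T P" and n: "n > 0" and u: "norm u = 1" and \<delta>: "\<delta> > 0"
  shows "\<exists>z. z \<noteq> 0 \<and> legal T (\<Union>k\<in>{1..n}. patch_transl P (real k *\<^sub>R z)) \<and>
                 norm (z /\<^sub>R norm z - u) < \<delta>"
proof (cases "P = {}")
  case True
  have "u \<noteq> 0" using u by auto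
  moreover have "legal T (\<Union>k\<in>{1..n}. patch_transl P (real k *\<^sub>R u))"
    unfolding legal_def patch_transl_def True by simp
  moreover have "norm (u /\<^sub>R norm u - u) < \<delta>" using u \<delta> by simp
  ultimately show ?thesis by blast
next
  case False
  then obtain t0 where t0: "t0 \<in> P" by blast
  define Y where "Y = {y. patch_transl P y \<subseteq> T}"
  have tinT: "tile_transl t0 y \<in> T" if "y \<in> Y" for y
    using that t0 unfolding Y_def patch_transl_def by auto
  obtain cc where cc_in: "\<forall>t\<in>T. cc t \<in> supp t"
    and eqv: "\<forall>t\<in>T. \<forall>t'\<in>T. \<forall>y. t' = tile_transl t y \<longrightarrow> cc t' = cc t + y"
    and ms: "meyer_set (cc ` T)"
    using mey unfolding meyer_property_def by blast
  obtain U where U: "open U" "0 \<in> U"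
    "{(a - b) - (c - e) | a b c e. a \<in> cc ` T \<and> b \<in> cc ` T \<and> c \<in> cc ` T \<and> e \<in> cc ` T} \<inter> U = {0}"
    using ms unfolding meyer_set_def by blast
  obtain r where r: "r > 0" "ball 0 r \<subseteq> U" using openE[OF U(1) U(2)] by blast
  have rigD: "a - b = c - e" if "a \<in> cc ` T" "b \<in> cc ` T" "c \<in> cc ` T" "e \<in> cc ` T"
     "norm ((a - b) - (c - e)) < r" for a b c e
  proof -
    have "(a - b) - (c - e) \<in> {(a - b) - (c - e) | a b c e. a \<in> cc ` T \<and> b \<in> cc ` T \<and> c \<in> cc ` T \<and> e \<in> cc ` T}"
      using that by blast
    moreover have "(a - b) - (c - e) \<in> U" using r(2) that(5) by (auto simp: dist_norm)
    ultimately have "(a - b) - (c - e) \<in> {0}" using U(3) by blast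
    then show ?thesis by simp
  qed
  define p where "p y = cc (tile_transl t0 y)" for y
  have pT: "p y \<in> cc ` T" if "y \<in> Y" for y using tinT[OF that] unfolding p_def by blast
  have pdiff: "p y' - p y = y' - y" if "y \<in> Y" "y' \<in> Y" for y y'
  proof -
    have "tile_transl t0 y' = tile_transl (tile_transl t0 y) (y' - y)"
      by (simp add: tile_transl_comp)
    then have "cc (tile_transl t0 y') = cc (tile_transl t0 y) + (y' - y)"
      using eqv tinT[OF that(1)] tinT[OF that(2)] by blast
    then show ?thesis unfolding p_def by simp
  qed
  have rig: "\<forall>a\<in>Y. \<forall>b\<in>Y. \<forall>c\<in>Y. \<forall>e\<in>Y. norm ((a - b) - (c - e)) < r \<longrightarrow> a - b = c - e"
  proof (intro ballI impI)
    fix a b c e assume abce: "a \<in> Y" "b \<in> Y" "c \<in> Y" "e \<in> Y" and lt: "norm ((a - b) - (c - e)) < r"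
    have "p a - p b = a - b" "p c - p e = c - e" using pdiff abce by auto
    then show "a - b = c - e" using rigD[OF pT[OF abce(1)] pT[OF abce(2)] pT[OF abce(3)] pT[OF abce(4)]] lt
      by simp
  qed
  obtain y0 where y0: "patch_transl P y0 \<subseteq> T" using P(2) unfolding legal_def by blast
  then have "y0 \<in> Y" unfolding Y_def by simp
  then have "cc (tile_transl t0 y0) \<in> supp (tile_transl t0 y0)" using cc_in tinT by blast
  then obtain q0 where q0: "q0 \<in> supp t0" unfolding supp_transl by blast
  obtain R where R: "R > 0" and RR: "\<forall>c. \<exists>x. patch_transl P x \<subseteq> T \<and> patch_supp (patch_transl P x) \<subseteq> ball c R"
    using rep P unfolding repetitive_def by blast
  have dense: "\<forall>w. \<exists>x\<in>Y. norm (x - w) < R"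
  proof
    fix w
    obtain x where x: "patch_transl P x \<subseteq> T" "patch_supp (patch_transl P x) \<subseteq> ball (w + q0) R"
      using RR by blast
    have "tile_transl t0 x \<in> patch_transl P x" using t0 unfolding patch_transl_def by blast
    then have "supp (tile_transl t0 x) \<subseteq> patch_supp (patch_transl P x)"
      unfolding patch_supp_def by blast
    moreover have "q0 + x \<in> supp (tile_transl t0 x)" using q0 unfolding supp_transl by blast
    ultimately have "q0 + x \<in> ball (w + q0) R" using x(2) by blast
    then have "norm (x - w) < R" by (simp add: dist_norm norm_minus_commute algebra_simps)
    moreover have "x \<in> Y" using x(1) unfolding Y_def by simp
    ultimately show "\<exists>x\<in>Y. norm (x - w) < R" by blast
  qed
  obtain z y where z: "z \<noteq> 0" and zY: "\<forall>k\<le>n. y + real k *\<^sub>R z \<in> Y"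
    and zd: "norm (z /\<^sub>R norm z - u) < \<delta>"
    using ap_lemma[OF R dense r(1) rig u \<delta> n] by blast
  have "patch_transl (\<Union>k\<in>{1..n}. patch_transl P (real k *\<^sub>R z)) y \<subseteq> T"
  proof -
    have "patch_transl (\<Union>k\<in>{1..n}. patch_transl P (real k *\<^sub>R z)) y
        = (\<Union>k\<in>{1..n}. patch_transl (patch_transl P (real k *\<^sub>R z)) y)"
      unfolding patch_transl_def by (simp add: image_UN)
    also have "\<dots> = (\<Union>k\<in>{1..n}. patch_transl P (y + real k *\<^sub>R z))"
      by (simp add: patch_transl_comp add.commute)
    also have "\<dots> \<subseteq> T" using zY unfolding Y_def by auto
    finally show ?thesis .
  qed
  then have "legal T (\<Union>k\<in>{1..n}. patch_transl P (real k *\<^sub>R z))" unfolding legal_def by blast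
  then show ?thesis using z zd by blast
qed

theorem corollary2p11:
  fixes T :: "('a::euclidean_space, 'l) tile set"
  assumes "is_tiling T" and "repetitive T" and "FLC T" and "meyer_property T"
  shows "(\<forall>P (n::nat). finite P \<and> legal T P \<and> n > 0 \<longrightarrow>
            (\<exists>z. z \<noteq> 0 \<and> legal T (\<Union>k\<in>{1..n}. patch_transl P (real k *\<^sub>R z))))
       \<and> (\<forall>P (n::nat) u (\<delta>::real). finite P \<and> legal T P \<and> n > 0 \<and> norm u = 1 \<and> \<delta> > 0 \<longrightarrow>
            (\<exists>z. z \<noteq> 0 \<and> legal T (\<Union>k\<in>{1..n}. patch_transl P (real k *\<^sub>R z)) \<and>
                 norm (z /\<^sub>R norm z - u) < \<delta>))"
proof (intro conjI allI impI)
  fix P and n :: nat and u :: 'a and \<delta> :: real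
  assume "finite P \<and> legal T P \<and> n > 0 \<and> norm u = 1 \<and> \<delta> > 0"
  then show "\<exists>z. z \<noteq> 0 \<and> legal T (\<Union>k\<in>{1..n}. patch_transl P (real k *\<^sub>R z)) \<and>
                 norm (z /\<^sub>R norm z - u) < \<delta>"
    using main_part2[OF assms] by blast
next
  fix P and n :: nat
  assume H: "finite P \<and> legal T P \<and> n > 0"
  obtain b :: 'a where b: "b \<in> Basis" using nonempty_Basis by blast
  then have "norm b = 1" by simp
  then show "\<exists>z. z \<noteq> 0 \<and> legal T (\<Union>k\<in>{1..n}. patch_transl P (real k *\<^sub>R z))"
    using main_part2[OF assms, of P n b 1] H by auto
qed

end
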